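(* Let $A$ be a partially ordered set and let $G$ be a passable game over $A$. If $G'$ is the canonical form of $G$ (a game in canonical form with $G'\equiv G$), then $G'$ is passable.
   Context: Games over a poset $A$ are defined inductively: for each $a\in A$ there is an atomic game $[a]$, which has no options; and if $L$ and $R$ are non-empty sets of games, then $\{L\mid R\}$ is a composite game with left options $L$ and right options $R$. The relations $\le$ and $\lhd$ are defined by simultaneous recursion: $G\le H$ iff (1) every left option $G^L$ of $G$ satisfies $G^L\lhd H$, (2) every right option $H^R$ of $H$ satisfies $G\lhd H^R$, and (3) if $G$ or $H$ is atomic then $G\lhd H$; and $G\lhd H$ iff (1) some right option $G^R$ of $G$ satisfies $G^R\le H$, or (2) some left option $H^L$ of $H$ satisfies $G\le H^L$, or (3) $G=[a]$, $H=[b]$ are atomic and $a\le b$. $G\equiv H$ means $G\le H$ and $H\le G$. A game $G$ is passable if $G\lhd G$ and recursively all its options are passable. Canonical form: among distinct left options $H,K$ of $G$, $K$ is dominated if $K\le H$; among distinct right options $H,K$, $K$ is dominated if $H\le K$. A left option $H$ of $G$ is reversible if $H$ has a right option $K$ with $K\le G$; a right option $H$ of $G$ is reversible if $H$ has a left option $K$ with $G\le K$. An option $H$ of $G$ is a passing option if $H\equiv G$. $G$ is in canonical form if it has no dominated, reversible or passing options and all its options are in canonical form. *)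

theory Defs
  imports Main "HOL-Library.FSet"
begin

datatype 'a game = Atom 'a | Comp "'a game fset" "'a game fset"

fun left_opts :: "'a game \<Rightarrow> 'a game fset" where
  "left_opts (Atom a) = {||}"
| "left_opts (Comp L R) = L"

fun right_opts :: "'a game \<Rightarrow> 'a game fset" where
  "right_opts (Atom a) = {||}"
| "right_opts (Comp L R) = R"

fun is_atom :: "'a game \<Rightarrow> bool" where
  "is_atom (Atom a) = True"
| "is_atom (Comp L R) = False"

inductive wf_game :: "'a game \<Rightarrow> bool" where
  wf_atom: "wf_game (Atom a)"
| wf_comp: "L \<noteq> {||} \<Longrightarrow> R \<noteq> {||} \<Longrightarrow> (\<forall>x. x |\<in>| L \<longrightarrow> wf_game x)
    \<Longrightarrow> (\<forall>x. x |\<in>| R \<longrightarrow> wf_game x) \<Longrightarrow> wf_game (Comp L R)"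

inductive game_le :: "'a::order game \<Rightarrow> 'a game \<Rightarrow> bool"
  and game_lf :: "'a::order game \<Rightarrow> 'a game \<Rightarrow> bool" where
  le_intro: "(\<forall>GL. GL |\<in>| left_opts G \<longrightarrow> game_lf GL H)
    \<Longrightarrow> (\<forall>HR. HR |\<in>| right_opts H \<longrightarrow> game_lf G HR)
    \<Longrightarrow> (is_atom G \<or> is_atom H \<longrightarrow> game_lf G H)
    \<Longrightarrow> game_le G H"
| lf_right: "GR |\<in>| right_opts G \<Longrightarrow> game_le GR H \<Longrightarrow> game_lf G H"
| lf_left: "HL |\<in>| left_opts H \<Longrightarrow> game_le G HL \<Longrightarrow> game_lf G H"
| lf_atom: "a \<le> b \<Longrightarrow> game_lf (Atom a) (Atom b)"

definition game_equiv :: "'a::order game \<Rightarrow> 'a game \<Rightarrow> bool" where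
  "game_equiv G H \<longleftrightarrow> game_le G H \<and> game_le H G"

inductive passable :: "'a::order game \<Rightarrow> bool" where
  "game_lf G G \<Longrightarrow> (\<forall>x. x |\<in>| left_opts G \<longrightarrow> passable x)
    \<Longrightarrow> (\<forall>x. x |\<in>| right_opts G \<longrightarrow> passable x) \<Longrightarrow> passable G"

inductive canonical :: "'a::order game \<Rightarrow> bool" where
  "(\<forall>H K. H |\<in>| left_opts G \<longrightarrow> K |\<in>| left_opts G \<longrightarrow> H \<noteq> K \<longrightarrow> \<not> game_le K H)
    \<Longrightarrow> (\<forall>H K. H |\<in>| right_opts G \<longrightarrow> K |\<in>| right_opts G \<longrightarrow> H \<noteq> K \<longrightarrow> \<not> game_le H K)
    \<Longrightarrow> (\<forall>H. H |\<in>| left_opts G \<longrightarrow> \<not> (\<exists>K. K |\<in>| right_opts H \<and> game_le K G))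
    \<Longrightarrow> (\<forall>H. H |\<in>| right_opts G \<longrightarrow> \<not> (\<exists>K. K |\<in>| left_opts H \<and> game_le G K))
    \<Longrightarrow> (\<forall>H. H |\<in>| left_opts G |\<union>| right_opts G \<longrightarrow> \<not> game_equiv H G)
    \<Longrightarrow> (\<forall>x. x |\<in>| left_opts G \<longrightarrow> canonical x)
    \<Longrightarrow> (\<forall>x. x |\<in>| right_opts G \<longrightarrow> canonical x)
    \<Longrightarrow> canonical G"

end

theory Submission
  imports Defs
begin

lemma size_opt:
  assumes "x |\<in>| left_opts G \<or> x |\<in>| right_opts G"
  shows "size x < size G"
proof (cases G)
  case (Atom a) then show ?thesis using assms by simp
next
  case (Comp L R)
  have f: "\<And>S. x |\<in>| S \<Longrightarrow> size x < size_fset size S + 1"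
  proof -
    fix S assume "x |\<in>| S"
    then have "Suc (size x) \<le> (\<Sum>y\<in>fset S. Suc (size y))"
      using member_le_sum[of x "fset S" "\<lambda>y. Suc (size y)"] by auto
    then show "size x < size_fset size S + 1" by (simp add: size_fset_simps)
  qed
  show ?thesis using assms Comp f[of L] f[of R] by auto
qed

lemma le_leftD: "game_le G H \<Longrightarrow> GL |\<in>| left_opts G \<Longrightarrow> game_lf GL H"
  by (auto elim: game_le.cases)
lemma le_rightD: "game_le G H \<Longrightarrow> HR |\<in>| right_opts H \<Longrightarrow> game_lf G HR"
  by (auto elim: game_le.cases)
lemma le_atomD: "game_le G H \<Longrightarrow> is_atom G \<or> is_atom H \<Longrightarrow> game_lf G H"
  by (auto elim: game_le.cases)
lemma lfE: "game_lf G H \<Longrightarrow>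
   (\<And>GR. GR |\<in>| right_opts G \<Longrightarrow> game_le GR H \<Longrightarrow> P) \<Longrightarrow>
   (\<And>HL. HL |\<in>| left_opts H \<Longrightarrow> game_le G HL \<Longrightarrow> P) \<Longrightarrow>
   (\<And>a b. G = Atom a \<Longrightarrow> H = Atom b \<Longrightarrow> a \<le> b \<Longrightarrow> P) \<Longrightarrow> P"
  by (auto elim: game_lf.cases)

lemma atom_le: "a \<le> b \<Longrightarrow> game_le (Atom a) (Atom b)"
  by (rule game_le_game_lf.le_intro) (auto intro: game_le_game_lf.lf_atom)

lemma atom_lfD: "game_lf (Atom a) (Atom b) \<Longrightarrow> a \<le> b"
  by (erule lfE) auto

lemma trans_all:
  fixes G H K :: "'a::order game"
  shows
  "size G + size H + size K = n \<Longrightarrow>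
   (game_le G H \<longrightarrow> game_le H K \<longrightarrow> game_le G K) \<and>
   (game_le G H \<longrightarrow> game_lf H K \<longrightarrow> game_lf G K) \<and>
   (game_lf G H \<longrightarrow> game_le H K \<longrightarrow> game_lf G K)"
proof (induction n arbitrary: G H K rule: less_induct)
  case (less n)
  have IH: "\<And>G' H' K' :: 'a game. size G' + size H' + size K' < size G + size H + size K \<Longrightarrow>
   (game_le G' H' \<longrightarrow> game_le H' K' \<longrightarrow> game_le G' K') \<and>
   (game_le G' H' \<longrightarrow> game_lf H' K' \<longrightarrow> game_lf G' K') \<and>
   (game_lf G' H' \<longrightarrow> game_le H' K' \<longrightarrow> game_lf G' K')"
    using less.IH less.prems by (metis (no_types))
  have T2: "game_lf G K" if a1: "game_le G H" and a2: "game_lf H K"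
    using a2
  proof (rule lfE)
    fix HR assume "HR |\<in>| right_opts H" "game_le HR K"
    moreover have "game_lf G HR" using a1 \<open>HR |\<in>| right_opts H\<close> by (rule le_rightD)
    moreover have "size HR < size H" using size_opt \<open>HR |\<in>| right_opts H\<close> by blast
    ultimately show ?thesis using IH[of G HR K] by auto
  next
    fix KL assume "KL |\<in>| left_opts K" "game_le H KL"
    moreover have "size KL < size K" using size_opt \<open>KL |\<in>| left_opts K\<close> by blast
    ultimately have "game_le G KL" using IH[of G H KL] a1 by auto
    then show ?thesis using \<open>KL |\<in>| left_opts K\<close> by (rule_tac game_le_game_lf.lf_left)
  next
    fix b c assume hb: "H = Atom b" "K = Atom c" "b \<le> c"
    have "game_lf G H" using a1 hb le_atomD[of G H] by simp
    then show ?thesis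
    proof (rule lfE)
      fix GR assume "GR |\<in>| right_opts G" "game_le GR H"
      moreover have "size GR < size G" using size_opt \<open>GR |\<in>| right_opts G\<close> by blast
      moreover have "game_le H K" using hb atom_le by simp
      ultimately have "game_le GR K" using IH[of GR H K] by auto
      then show ?thesis using \<open>GR |\<in>| right_opts G\<close> by (rule_tac game_le_game_lf.lf_right)
    next
      fix HL assume "HL |\<in>| left_opts H" then show ?thesis using hb by simp
    next
      fix a b' assume "G = Atom a" "H = Atom b'" "a \<le> b'"
      then show ?thesis using hb by (auto intro: game_le_game_lf.lf_atom)
    qed
  qed
  have T3: "game_lf G K" if a1: "game_lf G H" and a2: "game_le H K"
    using a1
  proof (rule lfE)
    fix GR assume "GR |\<in>| right_opts G" "game_le GR H"
    moreover have "size GR < size G" using size_opt \<open>GR |\<in>| right_opts G\<close> by blast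
    ultimately have "game_le GR K" using IH[of GR H K] a2 by auto
    then show ?thesis using \<open>GR |\<in>| right_opts G\<close> by (rule_tac game_le_game_lf.lf_right)
  next
    fix HL assume "HL |\<in>| left_opts H" "game_le G HL"
    moreover have "game_lf HL K" using a2 \<open>HL |\<in>| left_opts H\<close> by (rule le_leftD)
    moreover have "size HL < size H" using size_opt \<open>HL |\<in>| left_opts H\<close> by blast
    ultimately show ?thesis using IH[of G HL K] by auto
  next
    fix a b assume hb: "G = Atom a" "H = Atom b" "a \<le> b"
    have "game_lf H K" using a2 hb le_atomD[of H K] by simp
    then show ?thesis
    proof (rule lfE)
      fix HR assume "HR |\<in>| right_opts H" then show ?thesis using hb by simp
    next
      fix KL assume "KL |\<in>| left_opts K" "game_le H KL"
      moreover have "size KL < size K" using size_opt \<open>KL |\<in>| left_opts K\<close> by blast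
      moreover have "game_le G H" using hb atom_le by simp
      ultimately have "game_le G KL" using IH[of G H KL] by auto
      then show ?thesis using \<open>KL |\<in>| left_opts K\<close> by (rule_tac game_le_game_lf.lf_left)
    next
      fix b' c assume "H = Atom b'" "K = Atom c" "b' \<le> c"
      then show ?thesis using hb by (auto intro: game_le_game_lf.lf_atom)
    qed
  qed
  have T1: "game_le G K" if a1: "game_le G H" and a2: "game_le H K"
  proof (rule game_le_game_lf.le_intro)
    show "\<forall>GL. GL |\<in>| left_opts G \<longrightarrow> game_lf GL K"
    proof (intro allI impI)
      fix GL assume h: "GL |\<in>| left_opts G"
      have "game_lf GL H" using a1 h by (rule le_leftD)
      moreover have "size GL < size G" using size_opt h by blast
      ultimately show "game_lf GL K" using IH[of GL H K] a2 by auto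
    qed
    show "\<forall>KR. KR |\<in>| right_opts K \<longrightarrow> game_lf G KR"
    proof (intro allI impI)
      fix KR assume h: "KR |\<in>| right_opts K"
      have "game_lf H KR" using a2 h by (rule le_rightD)
      moreover have "size KR < size K" using size_opt h by blast
      ultimately show "game_lf G KR" using IH[of G H KR] a1 by auto
    qed
    show "is_atom G \<or> is_atom K \<longrightarrow> game_lf G K"
    proof
      assume "is_atom G \<or> is_atom K"
      then show "game_lf G K"
      proof
        assume "is_atom G" then have "game_lf G H" using a1 le_atomD by blast
        then show ?thesis using T3 a2 by blast
      next
        assume "is_atom K" then have "game_lf H K" using a2 le_atomD by blast
        then show ?thesis using T2 a1 by blast
      qed
    qed
  qed
  show ?case using T1 T2 T3 by blast
qed

lemma le_trans': "game_le G H \<Longrightarrow> game_le H K \<Longrightarrow> game_le G K"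
  using trans_all by blast
lemma le_lf_trans: "game_le G H \<Longrightarrow> game_lf H K \<Longrightarrow> game_lf G K"
  using trans_all by blast
lemma lf_le_trans: "game_lf G H \<Longrightarrow> game_le H K \<Longrightarrow> game_lf G K"
  using trans_all by blast

lemma canonD:
  assumes "canonical G"
  shows "\<And>H K. H |\<in>| left_opts G \<Longrightarrow> K |\<in>| left_opts G \<Longrightarrow> game_le K H \<Longrightarrow> H = K"
    and "\<And>H K. H |\<in>| right_opts G \<Longrightarrow> K |\<in>| right_opts G \<Longrightarrow> game_le H K \<Longrightarrow> H = K"
    and "\<And>H K. H |\<in>| left_opts G \<Longrightarrow> K |\<in>| right_opts H \<Longrightarrow> game_le K G \<Longrightarrow> False"
    and "\<And>H K. H |\<in>| right_opts G \<Longrightarrow> K |\<in>| left_opts H \<Longrightarrow> game_le G K \<Longrightarrow> False"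
  using assms by (auto elim!: canonical.cases)

lemma left_lemma:
  fixes G' X :: "'a::order game"
  assumes canon: "canonical G'" and GL: "GL' |\<in>| left_opts G'"
  shows "passable X \<Longrightarrow>
    (game_le GL' X \<longrightarrow> game_lf X G' \<longrightarrow> (\<exists>Y. passable Y \<and> game_equiv GL' Y)) \<and>
    (game_lf GL' X \<longrightarrow> game_le X G' \<longrightarrow> (\<exists>Y. passable Y \<and> game_equiv GL' Y))"
proof (induction X rule: passable.induct)
  case (1 X)
  note IHL = 1(2) and IHR = 1(3) and pX = passable.intros[OF 1(1)]
  have pX': "passable X" using pX IHL IHR by blast
  have P: "\<exists>Y. passable Y \<and> game_equiv GL' Y" if a1: "game_le GL' X" and a2: "game_lf X G'"
    using a2
  proof (rule lfE)
    fix XR assume h: "XR |\<in>| right_opts X" "game_le XR G'"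
    have "game_lf GL' XR" using a1 h(1) by (rule le_rightD)
    then show ?thesis using IHR h by blast
  next
    fix KL assume h: "KL |\<in>| left_opts G'" "game_le X KL"
    have "game_le GL' KL" using a1 h(2) by (rule le_trans')
    then have "KL = GL'" using canonD(1)[OF canon h(1) GL] by simp
    then show ?thesis using pX' a1 h(2) unfolding game_equiv_def by blast
  next
    fix a b assume "X = Atom a" "G' = Atom b" then show ?thesis using GL by simp
  qed
  have Q: "\<exists>Y. passable Y \<and> game_equiv GL' Y" if a1: "game_lf GL' X" and a2: "game_le X G'"
    using a1
  proof (rule lfE)
    fix R assume h: "R |\<in>| right_opts GL'" "game_le R X"
    have "game_le R G'" using h(2) a2 by (rule le_trans')
    then show ?thesis using canonD(3)[OF canon GL h(1)] by blast
  next
    fix XL assume h: "XL |\<in>| left_opts X" "game_le GL' XL"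
    have "game_lf XL G'" using a2 h(1) by (rule le_leftD)
    then show ?thesis using IHL h by blast
  next
    fix a b assume hb: "GL' = Atom a" "X = Atom b" "a \<le> b"
    have "game_lf X G'" using a2 hb le_atomD[of X G'] by simp
    then show ?thesis
    proof (rule lfE)
      fix XR assume "XR |\<in>| right_opts X" then show ?thesis using hb by simp
    next
      fix KL assume h: "KL |\<in>| left_opts G'" "game_le X KL"
      have "game_le GL' X" using hb atom_le by simp
      then have "game_le GL' KL" using h(2) by (rule le_trans')
      then have "KL = GL'" using canonD(1)[OF canon h(1) GL] by simp
      then have "game_lf (Atom b) (Atom a)" using h(2) hb le_atomD[of X KL] by simp
      then have "b \<le> a" by (rule atom_lfD)
      then have "GL' = X" using hb by simp
      then show ?thesis using pX' unfolding game_equiv_def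
        by (metis game_le_game_lf.le_intro le_leftD le_rightD \<open>game_le GL' X\<close>)
    next
      fix a' c assume "X = Atom a'" "G' = Atom c" then show ?thesis using GL by simp
    qed
  qed
  show ?case using P Q by blast
qed

lemma right_lemma:
  fixes G' X :: "'a::order game"
  assumes canon: "canonical G'" and GR: "GR' |\<in>| right_opts G'"
  shows "passable X \<Longrightarrow>
    (game_le X GR' \<longrightarrow> game_lf G' X \<longrightarrow> (\<exists>Y. passable Y \<and> game_equiv GR' Y)) \<and>
    (game_lf X GR' \<longrightarrow> game_le G' X \<longrightarrow> (\<exists>Y. passable Y \<and> game_equiv GR' Y))"
proof (induction X rule: passable.induct)
  case (1 X)
  note IHL = 1(2) and IHR = 1(3) and pX = passable.intros[OF 1(1)]
  have pX': "passable X" using pX IHL IHR by blast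
  have P: "\<exists>Y. passable Y \<and> game_equiv GR' Y" if a1: "game_le X GR'" and a2: "game_lf G' X"
    using a2
  proof (rule lfE)
    fix KR assume h: "KR |\<in>| right_opts G'" "game_le KR X"
    have "game_le KR GR'" using h(2) a1 by (rule le_trans')
    then have "KR = GR'" using canonD(2)[OF canon h(1) GR] by simp
    then show ?thesis using pX' a1 h(2) unfolding game_equiv_def by blast
  next
    fix XL assume h: "XL |\<in>| left_opts X" "game_le G' XL"
    have "game_lf XL GR'" using a1 h(1) by (rule le_leftD)
    then show ?thesis using IHL h by blast
  next
    fix a b assume "G' = Atom a" "X = Atom b" then show ?thesis using GR by simp
  qed
  have Q: "\<exists>Y. passable Y \<and> game_equiv GR' Y" if a1: "game_lf X GR'" and a2: "game_le G' X"
    using a1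
  proof (rule lfE)
    fix XR assume h: "XR |\<in>| right_opts X" "game_le XR GR'"
    have "game_lf G' XR" using a2 h(1) by (rule le_rightD)
    then show ?thesis using IHR h by blast
  next
    fix L assume h: "L |\<in>| left_opts GR'" "game_le X L"
    have "game_le G' L" using a2 h(2) by (rule le_trans')
    then show ?thesis using canonD(4)[OF canon GR h(1)] by blast
  next
    fix a b assume hb: "X = Atom a" "GR' = Atom b" "a \<le> b"
    have "game_lf G' X" using a2 hb le_atomD[of G' X] by simp
    then show ?thesis
    proof (rule lfE)
      fix KR assume h: "KR |\<in>| right_opts G'" "game_le KR X"
      have "game_le X GR'" using hb atom_le by simp
      then have "game_le KR GR'" using h(2) le_trans' by blast
      then have "KR = GR'" using canonD(2)[OF canon h(1) GR] by simp
      then have "game_lf (Atom b) (Atom a)" using h(2) hb le_atomD[of KR X] by simp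
      then have "b \<le> a" by (rule atom_lfD)
      then have "GR' = X" using hb by simp
      then show ?thesis using pX' unfolding game_equiv_def
        by (metis game_le_game_lf.le_intro le_leftD le_rightD \<open>game_le X GR'\<close>)
    next
      fix XL assume "XL |\<in>| left_opts X" then show ?thesis using hb by simp
    next
      fix c a' assume "G' = Atom c" "X = Atom a'" then show ?thesis using GR by simp
    qed
  qed
  show ?case using P Q by blast
qed

lemma main_aux:
  fixes G' :: "'a::order game"
  shows "canonical G' \<Longrightarrow> \<forall>G. passable G \<longrightarrow> game_equiv G' G \<longrightarrow> passable G'"
proof (induction G' rule: canonical.induct)
  case (1 G')
  have c: "canonical G'" using canonical.intros[OF 1(1-5)] 1(6,7) by blast
  show ?case
  proof (intro allI impI)
    fix G assume pG: "passable G" and eq: "game_equiv G' G"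
    have le1: "game_le G' G" and le2: "game_le G G'" using eq unfolding game_equiv_def by auto
    have "game_lf G G" using pG by (auto elim: passable.cases)
    then have "game_lf G' G" using le1 le_lf_trans by blast
    then have lf: "game_lf G' G'" using le2 lf_le_trans by blast
    have L: "passable x" if hx: "x |\<in>| left_opts G'" for x
    proof -
      have "game_lf x G" using le1 hx by (rule le_leftD)
      then obtain Y where "passable Y" "game_equiv x Y"
        using left_lemma[OF c hx pG] le2 by blast
      then show ?thesis using 1(6) hx by blast
    qed
    have R: "passable x" if hx: "x |\<in>| right_opts G'" for x
    proof -
      have "game_lf G x" using le2 hx by (rule le_rightD)
      then obtain Y where "passable Y" "game_equiv x Y"
        using right_lemma[OF c hx pG] le1 by blast
      then show ?thesis using 1(7) hx by blast
    qed
    show "passable G'" using lf L R by (blast intro: passable.intros)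
  qed
qed

theorem lemma6p3:
  fixes G G' :: "'a::order game"
  assumes "wf_game G" and "wf_game G'"
    and "passable G"
    and "canonical G'" and "game_equiv G' G"
  shows "passable G'"
  using main_aux assms by blast

end
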